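(* Let $\alpha>0$. Consider the model $Y_i=f(x_i)+V_i^{1/2}\xi_i$, $i=1,\dots,n$, $x_i=i/n$, with $\xi_1,\dots,\xi_n\overset{iid}{\sim}N(0,1)$, $f\in\mathcal{H}_\alpha(M)$ and $V=(V_1,\dots,V_n)\in[0,M]^n$. Let $R_i=Y_{i+1}-Y_i$ for $1\le i\le n-1$ and $$\hat T=\frac1{2n^2}\sum_{\substack{1\le i,j\le n-1\\|i-j|\ge2}}\left(\tfrac13(R_i^4+R_j^4)-2R_i^2R_j^2\right).$$ With $W_i=V_{i+1}+V_i$, $\delta_i=f(x_{i+1})-f(x_i)$ ($1\le i\le n-1$), $\bar W_n=\frac1{n-1}\sum_{i=1}^{n-1}W_i$, $\overline{\delta^2_n}=\frac1{n-1}\sum_{i=1}^{n-1}\delta_i^2$ and $T=\frac1n\sum_{i=1}^{n-1}(W_i+\delta_i^2-\bar W_n-\overline{\delta^2_n})^2$, we have $$E_{f,V}\big(|\hat T-T|^2\big)\lesssim n^{-1}+n^{-8\alpha},$$ with an implicit constant not depending on $n,f,V$.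
   Context: $\mathcal{H}_\alpha(M)$: functions $g:[0,1]\to\mathbb{R}$ with $|g^{(\lfloor\alpha\rfloor)}(x)-g^{(\lfloor\alpha\rfloor)}(y)|\le M|x-y|^{\alpha-\lfloor\alpha\rfloor}$ for all $x,y$ and $\|g^{(k)}\|_\infty\le M$ for $k=0,\dots,\lfloor\alpha\rfloor$; $M$ is a fixed sufficiently large constant. $E_{f,V}$ is expectation under the model. *)

theory Defs
  imports "HOL-Probability.Probability"
begin

definition holder_class :: "real \<Rightarrow> real \<Rightarrow> (real \<Rightarrow> real) \<Rightarrow> bool" where
  "holder_class \<alpha> M g \<longleftrightarrow>
     (let k = nat \<lfloor>\<alpha>\<rfloor> in
      \<exists>D :: nat \<Rightarrow> real \<Rightarrow> real.
        (\<forall>x\<in>{0..1}. D 0 x = g x) \<and>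
        (\<forall>j<k. \<forall>x\<in>{0..1}. (D j has_real_derivative D (Suc j) x) (at x within {0..1})) \<and>
        (\<forall>j\<le>k. \<forall>x\<in>{0..1}. \<bar>D j x\<bar> \<le> M) \<and>
        (\<forall>x\<in>{0..1}. \<forall>y\<in>{0..1}. \<bar>D k x - D k y\<bar> \<le> M * \<bar>x - y\<bar> powr (\<alpha> - real k)))"

definition std_normal :: "real measure" where
  "std_normal = density lborel (\<lambda>x. ennreal (std_normal_density x))"

definition noise_law :: "nat \<Rightarrow> (nat \<Rightarrow> real) measure" where
  "noise_law n = PiM {1..n} (\<lambda>_. std_normal)"

definition obsY :: "nat \<Rightarrow> (real \<Rightarrow> real) \<Rightarrow> (nat \<Rightarrow> real) \<Rightarrow> (nat \<Rightarrow> real) \<Rightarrow> nat \<Rightarrow> real" where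
  "obsY n f V \<xi> i = f (real i / real n) + sqrt (V i) * \<xi> i"

definition diffR :: "nat \<Rightarrow> (real \<Rightarrow> real) \<Rightarrow> (nat \<Rightarrow> real) \<Rightarrow> (nat \<Rightarrow> real) \<Rightarrow> nat \<Rightarrow> real" where
  "diffR n f V \<xi> i = obsY n f V \<xi> (Suc i) - obsY n f V \<xi> i"

definition That :: "nat \<Rightarrow> (real \<Rightarrow> real) \<Rightarrow> (nat \<Rightarrow> real) \<Rightarrow> (nat \<Rightarrow> real) \<Rightarrow> real" where
  "That n f V \<xi> = 1 / (2 * real n ^ 2) *
     (\<Sum>i\<in>{1..n-1}. \<Sum>j\<in>{j\<in>{1..n-1}. 2 \<le> \<bar>int i - int j\<bar>}.
        (1/3) * (diffR n f V \<xi> i ^ 4 + diffR n f V \<xi> j ^ 4)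
        - 2 * diffR n f V \<xi> i ^ 2 * diffR n f V \<xi> j ^ 2)"

definition Wsum :: "(nat \<Rightarrow> real) \<Rightarrow> nat \<Rightarrow> real" where
  "Wsum V i = V (Suc i) + V i"

definition delta :: "nat \<Rightarrow> (real \<Rightarrow> real) \<Rightarrow> nat \<Rightarrow> real" where
  "delta n f i = f (real (Suc i) / real n) - f (real i / real n)"

definition Ttarget :: "nat \<Rightarrow> (real \<Rightarrow> real) \<Rightarrow> (nat \<Rightarrow> real) \<Rightarrow> real" where
  "Ttarget n f V =
     (let Wbar = (\<Sum>i\<in>{1..n-1}. Wsum V i) / real (n - 1);
          dbar = (\<Sum>i\<in>{1..n-1}. delta n f i ^ 2) / real (n - 1)
      in (1 / real n) * (\<Sum>i\<in>{1..n-1}. (Wsum V i + delta n f i ^ 2 - Wbar - dbar) ^ 2))"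

end

theory Submission
  imports Defs
begin

lemma std_normal_prob: "prob_space std_normal"
  unfolding std_normal_def using real_dist_normal_dist by (simp add: real_distribution_def)

lemma space_std_normal[simp]: "space std_normal = UNIV"
  unfolding std_normal_def by simp

lemma sets_std_normal[simp, measurable_cong]: "sets std_normal = sets borel"
  unfolding std_normal_def by simp

lemma integrable_std_normal_iff:
  fixes g :: "real \<Rightarrow> real"
  assumes [measurable]: "g \<in> borel_measurable borel"
  shows "integrable std_normal g \<longleftrightarrow> integrable lborel (\<lambda>x. std_normal_density x * g x)"
  unfolding std_normal_def
  by (subst integrable_density) (auto simp: normal_density_nonneg)

lemma integral_std_normal:
  fixes g :: "real \<Rightarrow> real"
  assumes [measurable]: "g \<in> borel_measurable borel"
  shows "integral\<^sup>L std_normal g = integral\<^sup>L lborel (\<lambda>x. std_normal_density x * g x)"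
  unfolding std_normal_def
  by (subst integral_density) (auto simp: normal_density_nonneg)

lemma std_normal_integrable_pow: "integrable std_normal (\<lambda>x. x ^ k)"
  by (subst integrable_std_normal_iff) (auto intro: integrable_std_normal_moment)

definition mom :: "nat \<Rightarrow> real" where "mom k = integral\<^sup>L std_normal (\<lambda>x. x ^ k)"

lemma mom_even: "mom (2*k) = fact (2 * k) / (2^k * fact k)"
  unfolding mom_def by (subst integral_std_normal) (auto simp: integral_std_normal_moment_even)

lemma mom_odd: "mom (2*k+1) = 0"
  unfolding mom_def by (subst integral_std_normal, simp, rule integral_std_normal_moment_odd)

lemma mom_vals: "mom 0 = 1" "mom 1 = 0" "mom 2 = 1" "mom 3 = 0" "mom 4 = 3" "mom 8 = 105"
  using mom_even[of 0] mom_odd[of 0] mom_even[of 1] mom_odd[of 1] mom_even[of 2] mom_even[of 4]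
  by (simp_all add: fact_numeral eval_nat_numeral)

lemma noise_prob: "prob_space (noise_law n)"
  unfolding noise_law_def by (rule prob_space_PiM) (rule std_normal_prob)

lemma distr_coord:
  assumes "u \<in> {1..n}"
  shows "distr (noise_law n) std_normal (\<lambda>\<omega>. \<omega> u) = std_normal"
  unfolding noise_law_def using assms by (intro distr_PiM_component std_normal_prob) auto

lemma meas_coord[measurable]:
  assumes "u \<in> {1..n}"
  shows "(\<lambda>\<omega>. \<omega> u) \<in> borel_measurable (noise_law n)"
proof -
  have "(\<lambda>\<omega>. \<omega> u) \<in> measurable (noise_law n) std_normal"
    unfolding noise_law_def using assms by (intro measurable_component_singleton) auto
  then show ?thesis by (simp add: measurable_def)
qed

lemma coord_integrable:
  fixes g :: "real \<Rightarrow> real"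
  assumes "u \<in> {1..n}" "g \<in> borel_measurable borel" "integrable std_normal g"
  shows "integrable (noise_law n) (\<lambda>\<omega>. g (\<omega> u))"
proof -
  have m: "(\<lambda>\<omega>. \<omega> u) \<in> measurable (noise_law n) std_normal"
    unfolding noise_law_def using assms by (intro measurable_component_singleton) auto
  have "integrable (distr (noise_law n) std_normal (\<lambda>\<omega>. \<omega> u)) g"
    using distr_coord[OF assms(1)] assms by simp
  then show ?thesis using m assms by (subst (asm) integrable_distr_eq) (auto simp: measurable_def)
qed

lemma coord_integral:
  fixes g :: "real \<Rightarrow> real"
  assumes "u \<in> {1..n}" "g \<in> borel_measurable borel"
  shows "integral\<^sup>L (noise_law n) (\<lambda>\<omega>. g (\<omega> u)) = integral\<^sup>L std_normal g"
proof -
  have m: "(\<lambda>\<omega>. \<omega> u) \<in> measurable (noise_law n) std_normal"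
    unfolding noise_law_def using assms by (intro measurable_component_singleton) auto
  have "integral\<^sup>L (distr (noise_law n) std_normal (\<lambda>\<omega>. \<omega> u)) g = integral\<^sup>L (noise_law n) (\<lambda>\<omega>. g (\<omega> u))"
    using m assms by (intro integral_distr) (auto simp: measurable_def)
  then show ?thesis using distr_coord[OF assms(1)] by simp
qed


lemma coords_indep:
  assumes "1 \<le> n"
  shows "prob_space.indep_vars (noise_law n) (\<lambda>_. std_normal) (\<lambda>k \<omega>. \<omega> k) {1..n}"
proof -
  interpret prob_space "noise_law n" by (rule noise_prob)
  have rv: "random_variable std_normal (\<lambda>\<omega>. \<omega> k)" if "k \<in> {1..n}" for k
    unfolding noise_law_def using that by (intro measurable_component_singleton) auto
  have "distr (noise_law n) (\<Pi>\<^sub>M i\<in>{1..n}. std_normal) (\<lambda>x. \<lambda>i\<in>{1..n}. x i)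
       = distr (noise_law n) (noise_law n) (\<lambda>x. x)"
    unfolding noise_law_def by (rule distr_cong) (simp_all add: space_PiM)
  also have "\<dots> = noise_law n" by (rule distr_id)
  also have "\<dots> = (\<Pi>\<^sub>M i\<in>{1..n}. distr (noise_law n) std_normal (\<lambda>x. x i))"
    unfolding noise_law_def[of n]
  proof (rule PiM_cong)
    fix x assume "x \<in> {1..n}"
    then show "std_normal = distr (Pi\<^sub>M {1..n} (\<lambda>_. std_normal)) std_normal (\<lambda>xa. xa x)"
      using distr_coord[of x n] unfolding noise_law_def by simp
  qed simp
  finally have eq: "distr (noise_law n) (\<Pi>\<^sub>M i\<in>{1..n}. std_normal) (\<lambda>x. \<lambda>i\<in>{1..n}. x i)
      = (\<Pi>\<^sub>M i\<in>{1..n}. distr (noise_law n) std_normal (\<lambda>x. x i))" .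
  have ne: "{1..n} \<noteq> {}" using assms by auto
  show ?thesis by (rule iffD2[OF indep_vars_iff_distr_eq_PiM'[OF ne rv] eq])
qed

lemma indep_blocks:
  fixes g h :: "(nat \<Rightarrow> real) \<Rightarrow> real"
  assumes n: "1 \<le> n" and AB: "A \<subseteq> {1..n}" "B \<subseteq> {1..n}" "A \<inter> B = {}"
    and gm: "g \<in> borel_measurable (PiM A (\<lambda>_. std_normal))"
    and hm: "h \<in> borel_measurable (PiM B (\<lambda>_. std_normal))"
    and gi: "integrable (noise_law n) (\<lambda>\<omega>. g (restrict \<omega> A))"
    and hi: "integrable (noise_law n) (\<lambda>\<omega>. h (restrict \<omega> B))"
  shows "integral\<^sup>L (noise_law n) (\<lambda>\<omega>. g (restrict \<omega> A) * h (restrict \<omega> B))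
       = integral\<^sup>L (noise_law n) (\<lambda>\<omega>. g (restrict \<omega> A)) * integral\<^sup>L (noise_law n) (\<lambda>\<omega>. h (restrict \<omega> B))"
proof -
  interpret prob_space "noise_law n" by (rule noise_prob)
  have iv: "indep_vars (\<lambda>j. PiM (case_bool A B j) (\<lambda>_. std_normal))
      (\<lambda>j \<omega>. restrict (\<lambda>i. \<omega> i) (case_bool A B j)) UNIV"
  proof (rule indep_vars_restrict[OF coords_indep[OF n]])
    show "\<And>j. j \<in> UNIV \<Longrightarrow> case_bool A B j \<subseteq> {1..n}" using AB by (simp split: bool.split)
    show "disjoint_family_on (case_bool A B) UNIV" using AB
      unfolding disjoint_family_on_def by (simp split: bool.split) blast
  qed
  have e1: "(\<lambda>j. PiM (case_bool A B j) (\<lambda>_. std_normal)) = case_bool (PiM A (\<lambda>_. std_normal)) (PiM B (\<lambda>_. std_normal))"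
    by (rule ext) (simp split: bool.split)
  have e2: "(\<lambda>j \<omega>. restrict (\<lambda>i. \<omega> i) (case_bool A B j)) = case_bool (\<lambda>\<omega>. restrict \<omega> A) (\<lambda>\<omega>. restrict \<omega> B)"
    by (rule ext) (simp split: bool.split)
  have "indep_var (PiM A (\<lambda>_. std_normal)) (\<lambda>\<omega>. restrict \<omega> A) (PiM B (\<lambda>_. std_normal)) (\<lambda>\<omega>. restrict \<omega> B)"
    unfolding indep_var_def using iv[unfolded e1 e2] .
  then have "indep_var borel (g \<circ> (\<lambda>\<omega>. restrict \<omega> A)) borel (h \<circ> (\<lambda>\<omega>. restrict \<omega> B))"
    by (rule indep_var_compose[OF _ gm hm])
  then have "indep_var borel (\<lambda>\<omega>. g (restrict \<omega> A)) borel (\<lambda>\<omega>. h (restrict \<omega> B))"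
    by (simp add: comp_def)
  from indep_var_lebesgue_integral[OF this gi hi] show ?thesis .
qed


lemma comp_meas_Pi:
  assumes "i \<in> A"
  shows "(\<lambda>\<omega>. \<omega> i) \<in> borel_measurable (PiM A (\<lambda>_. std_normal))"
proof -
  have "(\<lambda>\<omega>. \<omega> i) \<in> measurable (PiM A (\<lambda>_. std_normal)) std_normal"
    using assms by (rule measurable_component_singleton)
  then show ?thesis by (simp add: measurable_def)
qed


lemma indep2:
  fixes p q :: "real \<Rightarrow> real"
  assumes n: "1 \<le> n" and uv: "u \<in> {1..n}" "v \<in> {1..n}" "u \<noteq> v"
    and pm[measurable]: "p \<in> borel_measurable borel" and qm[measurable]: "q \<in> borel_measurable borel"
    and pi: "integrable std_normal p" and qi: "integrable std_normal q"
  shows "integral\<^sup>L (noise_law n) (\<lambda>\<omega>. p (\<omega> u) * q (\<omega> v)) = integral\<^sup>L std_normal p * integral\<^sup>L std_normal q"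
proof -
  have gm: "(\<lambda>\<omega>. p (\<omega> u)) \<in> borel_measurable (PiM {u} (\<lambda>_. std_normal))"
    using measurable_compose[OF comp_meas_Pi[of u "{u}"] pm] by simp
  have hm: "(\<lambda>\<omega>. q (\<omega> v)) \<in> borel_measurable (PiM {v} (\<lambda>_. std_normal))"
    using measurable_compose[OF comp_meas_Pi[of v "{v}"] qm] by simp
  have gi: "integrable (noise_law n) (\<lambda>\<omega>. p (restrict \<omega> {u} u))"
    using coord_integrable[OF uv(1) pm pi] by simp
  have hi: "integrable (noise_law n) (\<lambda>\<omega>. q (restrict \<omega> {v} v))"
    using coord_integrable[OF uv(2) qm qi] by simp
  have "integral\<^sup>L (noise_law n) (\<lambda>\<omega>. p (restrict \<omega> {u} u) * q (restrict \<omega> {v} v))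
      = integral\<^sup>L (noise_law n) (\<lambda>\<omega>. p (restrict \<omega> {u} u)) * integral\<^sup>L (noise_law n) (\<lambda>\<omega>. q (restrict \<omega> {v} v))"
    using indep_blocks[OF n _ _ _ gm hm] gi hi uv by simp
  then show ?thesis using coord_integral[OF uv(1) pm] coord_integral[OF uv(2) qm] by simp
qed

lemma std_normal_poly_int:
  "integrable std_normal (\<lambda>x. (c + a * x :: real) ^ k)"
  "integral\<^sup>L std_normal (\<lambda>x. (c + a * x :: real) ^ k) = (\<Sum>j\<le>k. real (k choose j) * a ^ j * c ^ (k - j) * mom j)"
proof -
  interpret std: prob_space std_normal by (rule std_normal_prob)
  have eq: "(c + a * x) ^ k = (\<Sum>j\<le>k. (real (k choose j) * a ^ j * c ^ (k - j)) * x ^ j)" for x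
    using binomial_ring[of "a * x" c k] by (simp add: add.commute power_mult_distrib mult_ac)
  have ii: "integrable std_normal (\<lambda>x. (real (k choose j) * a ^ j * c ^ (k - j)) * x ^ j)" for j
    by (intro integrable_mult_right std_normal_integrable_pow)
  show "integrable std_normal (\<lambda>x. (c + a * x :: real) ^ k)"
    unfolding eq by (rule Bochner_Integration.integrable_sum) (rule ii)
  show "integral\<^sup>L std_normal (\<lambda>x. (c + a * x :: real) ^ k) = (\<Sum>j\<le>k. real (k choose j) * a ^ j * c ^ (k - j) * mom j)"
    unfolding eq by (subst Bochner_Integration.integral_sum) (auto intro: ii simp: mom_def std_normal_integrable_pow)
qed

lemma abs_mult_le_sq: "\<bar>a * b\<bar> \<le> a^2 + (b::real)^2"
proof -
  have "0 \<le> (\<bar>a\<bar> - \<bar>b\<bar>)^2" by simp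
  hence "2*\<bar>a\<bar>*\<bar>b\<bar> \<le> \<bar>a\<bar>^2 + \<bar>b\<bar>^2" by (simp add: power2_eq_square algebra_simps)
  moreover have "0 \<le> \<bar>a\<bar>*\<bar>b\<bar>" by simp
  ultimately show ?thesis unfolding abs_mult power2_abs by linarith
qed

lemma integrable_prod_sq:
  fixes F G :: "'a \<Rightarrow> real"
  assumes "integrable M (\<lambda>x. F x ^ 2)" "integrable M (\<lambda>x. G x ^ 2)"
    "F \<in> borel_measurable M" "G \<in> borel_measurable M"
  shows "integrable M (\<lambda>x. F x * G x)"
proof (rule Bochner_Integration.integrable_bound)
  show "integrable M (\<lambda>x. F x ^ 2 + G x ^ 2)" using assms by auto
  show "(\<lambda>x. F x * G x) \<in> borel_measurable M" using assms by measurable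
  show "AE x in M. norm (F x * G x) \<le> norm (F x ^ 2 + G x ^ 2)"
    using abs_mult_le_sq by auto
qed

lemma two_coord:
  assumes n: "1 \<le> n" and uv: "u \<in> {1..n}" "v \<in> {1..n}" "u \<noteq> v"
  shows "integrable (noise_law n) (\<lambda>\<omega>. (c + (-b) * \<omega> u + a * \<omega> v) ^ k)"
    "integral\<^sup>L (noise_law n) (\<lambda>\<omega>. (c + (-b) * \<omega> u + a * \<omega> v) ^ k)
     = (\<Sum>j\<le>k. real (k choose j) * a ^ j * mom j *
          (\<Sum>l\<le>k-j. real ((k-j) choose l) * (-b) ^ l * c ^ (k - j - l) * mom l))"
proof -
  have eq: "(c + (-b) * \<omega> u + a * \<omega> v) ^ k
     = (\<Sum>j\<le>k. real (k choose j) * a ^ j * ((c + (-b) * \<omega> u) ^ (k - j) * (\<omega> v) ^ j))" for \<omega>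
    using binomial_ring[of "a * \<omega> v" "c + (-b) * \<omega> u" k]
    by (simp add: add.commute add.left_commute power_mult_distrib mult_ac)
  have ii: "integrable (noise_law n) (\<lambda>\<omega>. real (k choose j) * a ^ j * ((c + (-b) * \<omega> u) ^ (k - j) * (\<omega> v) ^ j))" for j
  proof -
    interpret prob_space "noise_law n" by (rule noise_prob)
    have i1: "integrable (noise_law n) (\<lambda>\<omega>. (c + (-b) * \<omega> u) ^ (k - j))"
      using coord_integrable[OF uv(1) _ std_normal_poly_int(1)[of c "-b" "k-j"]] by simp
    have i2: "integrable (noise_law n) (\<lambda>\<omega>. (\<omega> v) ^ j)"
      using coord_integrable[OF uv(2) _ std_normal_integrable_pow[of j]] by simp
    note [measurable] = meas_coord[OF uv(1)] meas_coord[OF uv(2)]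
    have i1': "integrable (noise_law n) (\<lambda>\<omega>. ((c + (-b) * \<omega> u) ^ (k - j))^2)"
      using coord_integrable[OF uv(1) _ std_normal_poly_int(1)[of c "-b" "2*(k-j)"]] by (simp add: power_mult[symmetric] mult.commute)
    have i2': "integrable (noise_law n) (\<lambda>\<omega>. ((\<omega> v) ^ j)^2)"
      using coord_integrable[OF uv(2) _ std_normal_integrable_pow[of "2*j"]] by (simp add: power_mult[symmetric] mult.commute)
    have "integrable (noise_law n) (\<lambda>\<omega>. (c + (-b) * \<omega> u) ^ (k - j) * (\<omega> v) ^ j)"
      by (rule integrable_prod_sq[OF i1' i2']) measurable
    then show ?thesis by (intro integrable_mult_right)
  qed
  show "integrable (noise_law n) (\<lambda>\<omega>. (c + (-b) * \<omega> u + a * \<omega> v) ^ k)"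
    unfolding eq by (rule Bochner_Integration.integrable_sum) (rule ii)
  have "integral\<^sup>L (noise_law n) (\<lambda>\<omega>. (c + (-b) * \<omega> u) ^ (k - j) * (\<omega> v) ^ j)
     = mom j * (\<Sum>l\<le>k-j. real ((k-j) choose l) * (-b) ^ l * c ^ (k - j - l) * mom l)" for j
    using indep2[OF n uv, of "\<lambda>x. (c + (-b) * x) ^ (k - j)" "\<lambda>x. x ^ j"]
      std_normal_poly_int[of c "-b" "k-j"] std_normal_integrable_pow[of j]
    by (simp add: mom_def mult.commute)
  moreover have "integral\<^sup>L (noise_law n) (\<lambda>\<omega>. \<Sum>j\<le>k. real (k choose j) * a ^ j * ((c + (-b) * \<omega> u) ^ (k - j) * (\<omega> v) ^ j))
    = (\<Sum>j\<le>k. integral\<^sup>L (noise_law n) (\<lambda>\<omega>. real (k choose j) * a ^ j * ((c + (-b) * \<omega> u) ^ (k - j) * (\<omega> v) ^ j)))"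
    by (rule Bochner_Integration.integral_sum) (rule ii)
  ultimately show "integral\<^sup>L (noise_law n) (\<lambda>\<omega>. (c + (-b) * \<omega> u + a * \<omega> v) ^ k)
     = (\<Sum>j\<le>k. real (k choose j) * a ^ j * mom j *
          (\<Sum>l\<le>k-j. real ((k-j) choose l) * (-b) ^ l * c ^ (k - j - l) * mom l))"
    unfolding eq by (simp add: mult_ac)
qed

lemma mom_suc: "mom (Suc 0) = 0" "mom (Suc (Suc 0)) = 1" "mom (Suc (Suc (Suc 0))) = 0"
  "mom (Suc (Suc (Suc (Suc 0)))) = 3"
  using mom_vals by (simp_all add: numeral_eq_Suc)

lemma two_coord_2:
  assumes n: "1 \<le> n" and uv: "u \<in> {1..n}" "v \<in> {1..n}" "u \<noteq> v"
  shows "integral\<^sup>L (noise_law n) (\<lambda>\<omega>. (c + (-b) * \<omega> u + a * \<omega> v) ^ 2) = c^2 + b^2 + a^2"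
  using two_coord(2)[OF assms, of c b a 2]
  by (simp add: numeral_eq_Suc mom_vals mom_suc algebra_simps power2_eq_square)

lemma two_coord_4:
  assumes n: "1 \<le> n" and uv: "u \<in> {1..n}" "v \<in> {1..n}" "u \<noteq> v"
  shows "integral\<^sup>L (noise_law n) (\<lambda>\<omega>. (c + (-b) * \<omega> u + a * \<omega> v) ^ 4) = c^4 + 6*c^2*(a^2+b^2) + 3*(a^2+b^2)^2"
  using two_coord(2)[OF assms, of c b a 4]
  by (simp add: numeral_eq_Suc mom_vals mom_suc algebra_simps power2_eq_square)


lemma cnt1:
  fixes x :: nat
  shows "(\<Sum>k\<in>{1..N}. (if \<bar>int x - int k\<bar> \<le> 1 then 1 else 0 :: real)) \<le> 3"
proof -
  have "(\<Sum>k\<in>{1..N}. (if \<bar>int x - int k\<bar> \<le> 1 then 1 else 0 :: real))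
      = real (card {k\<in>{1..N}. \<bar>int x - int k\<bar> \<le> 1})"
    by (simp add: sum.If_cases Int_def conj_commute)
  also have "card {k\<in>{1..N}. \<bar>int x - int k\<bar> \<le> 1} \<le> card {x - 1, x, Suc x}"
    by (rule card_mono) auto
  also have "card {x - 1, x, Suc x} \<le> 3" by (rule order.trans[OF card_insert_le_m1]) (auto simp: card_insert_le_m1)
  finally show ?thesis by simp
qed

lemma pow8_le: "(x+y+z::real)^8 \<le> 3^8 * (x^8+y^8+z^8)"
proof -
  define m where "m = max \<bar>x\<bar> (max \<bar>y\<bar> \<bar>z\<bar>)"
  have "\<bar>x+y+z\<bar> \<le> 3*m" unfolding m_def by linarith
  hence "\<bar>x+y+z\<bar>^8 \<le> (3*m)^8" by (rule power_mono) simp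
  moreover have "m^8 \<le> x^8+y^8+z^8"
  proof -
    have "m = \<bar>x\<bar> \<or> m = \<bar>y\<bar> \<or> m = \<bar>z\<bar>" unfolding m_def by linarith
    moreover have "\<bar>x\<bar>^8 = x^8" "\<bar>y\<bar>^8 = y^8" "\<bar>z\<bar>^8 = z^8" by (simp_all add: power_even_abs_numeral)
    moreover have "0 \<le> x^8" "0 \<le> y^8" "0 \<le> z^8" by (simp_all add: zero_le_even_power)
    ultimately show ?thesis by auto
  qed
  ultimately show ?thesis by (simp add: power_mult_distrib power_even_abs_numeral)
qed

lemma hh_sq_le: "((1/3)*(x^4+y^4) - 2*x^2*y^2)^2 \<le> 4*(x^8+(y::real)^8)"
proof -
  define p where "p = x^2"
  define q where "q = y^2"
  have p0: "0 \<le> p" "0 \<le> q" unfolding p_def q_def by simp_all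
  have e: "x^4 = p^2" "y^4 = q^2" "x^8 = (p^2)^2" "y^8 = (q^2)^2" "x^2 = p" "y^2 = q" unfolding p_def q_def by (simp_all flip: power_mult)
  have "0 \<le> (p-q)^2" by simp
  hence "2*p*q \<le> p^2+q^2" unfolding power2_diff by linarith
  have pq0: "0 \<le> 2*p*q" "0 \<le> p^2+q^2" using p0 by simp_all
  have gen: "abs ((1/3)*aa - bb) \<le> (4/3)*aa" if "bb \<le> aa" "0 \<le> bb" "0 \<le> aa" for aa bb :: real using that
    by linarith
  have h1: "\<bar>(1/3)*(p^2+q^2) - 2*p*q\<bar> \<le> (4/3)*(p^2+q^2)"
    by (rule gen) (use \<open>2*p*q \<le> p^2+q^2\<close> pq0 in auto)
  have "\<bar>(1/3)*(p^2+q^2) - 2*p*q\<bar>^2 \<le> ((4/3)*(p^2+q^2))^2"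
    by (rule power_mono[OF h1]) simp
  hence "((1/3)*(p^2+q^2) - 2*p*q)^2 \<le> ((4/3)*(p^2+q^2))^2" by simp
  also have "\<dots> = (16/9)*(p^2+q^2)^2" by (simp add: power_mult_distrib power2_eq_square algebra_simps)
  also have "\<dots> \<le> (16/9)*(2*((p^2)^2+(q^2)^2))"
  proof -
    have "0 \<le> (p^2-q^2)^2" by simp
    hence "(p^2+q^2)^2 \<le> 2*((p^2)^2+(q^2)^2)" unfolding power2_diff power2_sum by (simp add: algebra_simps)
    thus ?thesis by simp
  qed
  finally have F: "((1/3)*(p^2+q^2) - 2*p*q)^2 \<le> (16/9)*(2*((p^2)^2+(q^2)^2))" .
  have "0 \<le> (p^2)^2+(q^2)^2" by simp
  then have "(16/9)*(2*((p^2)^2+(q^2)^2)) \<le> 4*((p^2)^2+(q^2)^2)" by simp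
  then show ?thesis unfolding e using F by (rule order.trans[rotated])
qed

lemma bias_bound:
  fixes m d :: "nat \<Rightarrow> real" and N :: nat and B D :: real
  assumes N: "1 \<le> N" and mb: "\<And>i. i \<in> {1..N} \<Longrightarrow> 0 \<le> m i \<and> m i \<le> B"
    and dbd: "\<And>i. i \<in> {1..N} \<Longrightarrow> 0 \<le> d i \<and> d i \<le> D"
  shows "\<bar>1/(2*real (N+1)^2) * (\<Sum>i\<in>{1..N}. \<Sum>j\<in>{1..N}. if 2 \<le> \<bar>int i - int j\<bar> then (m i - m j)^2 - (2/3)*(d i + d j) else 0)
     - (1 / real (N+1)) * (\<Sum>i\<in>{1..N}. (m i - (\<Sum>k\<in>{1..N}. m k)/real N)^2)\<bar> \<le> 3*B^2/real (N+1) + D"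
proof -
  define I where "I = {1..N}"
  define n where "n = real (N+1)"
  define mbar where "mbar = (\<Sum>k\<in>I. m k)/real N"
  define y where "y i = m i - mbar" for i
  define SY where "SY = (\<Sum>i\<in>I. (y i)^2)"
  define T where "T = SY / n"
  define P where "P i j = (2 \<le> \<bar>int i - int j\<bar>)" for i j
  define H where "H = (\<Sum>i\<in>I. \<Sum>j\<in>I. if \<not> P i j then (m i - m j)^2 else 0)"
  define Dd where "Dd = (\<Sum>i\<in>I. \<Sum>j\<in>I. if P i j then (2/3)*(d i + d j) else 0)"
  have cardI: "card I = N" unfolding I_def by simp
  have finI: "finite I" unfolding I_def by simp
  have Npos: "0 < real N" using N by simp
  have n_pos: "0 < n" unfolding n_def by simp
  have Nn: "real N \<le> n" unfolding n_def by simp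
  have B0: "0 \<le> B" using mb[of 1] N by auto
  have sumy: "(\<Sum>i\<in>I. y i) = 0"
    unfolding y_def mbar_def using Npos cardI by (simp add: sum_subtractf)
  have G: "(\<Sum>i\<in>I. \<Sum>j\<in>I. (m i - m j)^2) = 2 * real N * SY"
  proof -
    have "(\<Sum>i\<in>I. \<Sum>j\<in>I. (m i - m j)^2) = (\<Sum>i\<in>I. \<Sum>j\<in>I. (y i)^2 + (y j)^2 - 2 * y i * y j)"
    proof -
      have "(m i - m j)^2 = (y i)^2 + (y j)^2 - 2 * y i * y j" for i j
      proof -
        have "m i - m j = y i - y j" by (simp add: y_def)
        then show ?thesis by (simp add: power2_diff)
      qed
      then show ?thesis by simp
    qed
    also have "\<dots> = (\<Sum>i\<in>I. real N * (y i)^2 + SY - 2 * y i * (\<Sum>j\<in>I. y j))"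
      unfolding SY_def by (simp add: sum.distrib sum_subtractf sum_distrib_left cardI mult.assoc)
    also have "\<dots> = 2 * real N * SY"
      unfolding sumy SY_def by (simp add: sum.distrib sum_distrib_left[symmetric] cardI algebra_simps)
    finally show ?thesis .
  qed
  have split: "(\<Sum>i\<in>I. \<Sum>j\<in>I. if P i j then (m i - m j)^2 - (2/3)*(d i + d j) else 0)
      = (\<Sum>i\<in>I. \<Sum>j\<in>I. (m i - m j)^2) - H - Dd"
  proof -
    have "\<And>i j. (if P i j then (m i - m j)^2 - (2/3)*(d i + d j) else 0)
        = (m i - m j)^2 - (if \<not> P i j then (m i - m j)^2 else 0) - (if P i j then (2/3)*(d i + d j) else 0)"
      by simp
    then show ?thesis unfolding H_def Dd_def by (simp add: sum_subtractf)
  qed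
  have H0: "0 \<le> H" unfolding H_def by (intro sum_nonneg) simp
  have HB: "H \<le> 3 * real N * B^2"
  proof -
    have "H \<le> (\<Sum>i\<in>I. \<Sum>j\<in>I. B^2 * (if \<bar>int i - int j\<bar> \<le> 1 then 1 else 0))"
      unfolding H_def
    proof (intro sum_mono)
      fix i j assume ij: "i \<in> I" "j \<in> I"
      have "\<bar>m i - m j\<bar> \<le> B" using mb[of i] mb[of j] ij unfolding I_def by auto
      hence "(m i - m j)^2 \<le> B^2"
        by (metis abs_ge_zero power2_abs power_mono)
      then show "(if \<not> P i j then (m i - m j)^2 else 0) \<le> B^2 * (if \<bar>int i - int j\<bar> \<le> 1 then 1 else 0)"
        unfolding P_def by auto
    qed
    also have "\<dots> = (\<Sum>i\<in>I. B^2 * (\<Sum>j\<in>I. (if \<bar>int i - int j\<bar> \<le> 1 then 1 else 0)))"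
      by (simp add: sum_distrib_left)
    also have "\<dots> \<le> (\<Sum>i\<in>I. B^2 * 3)"
    proof (intro sum_mono mult_left_mono)
      fix i show "(\<Sum>j\<in>I. (if \<bar>int i - int j\<bar> \<le> 1 then 1 else 0)) \<le> (3::real)"
        unfolding I_def by (rule cnt1)
    qed simp
    also have "\<dots> = 3 * real N * B^2" using cardI by simp
    finally show ?thesis .
  qed
  have Dd0: "0 \<le> Dd" unfolding Dd_def using dbd by (intro sum_nonneg) (auto simp: I_def)
  have DdB: "Dd \<le> (4/3) * real N^2 * D"
  proof -
    have "Dd \<le> (\<Sum>i\<in>I. \<Sum>j\<in>I. (4/3) * D)"
      unfolding Dd_def
    proof (intro sum_mono)
      fix i j assume ij: "i \<in> I" "j \<in> I"
      then have "0 \<le> d i \<and> d i \<le> D" "0 \<le> d j \<and> d j \<le> D" using dbd unfolding I_def by auto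
      then show "(if P i j then (2/3)*(d i + d j) else 0) \<le> (4/3) * D" by auto
    qed
    also have "\<dots> = (4/3) * real N^2 * D" using cardI by (simp add: power2_eq_square)
    finally show ?thesis .
  qed
  have mbar_b: "0 \<le> mbar \<and> mbar \<le> B"
  proof -
    have "0 \<le> (\<Sum>k\<in>I. m k)" using mb by (intro sum_nonneg) (auto simp: I_def)
    moreover have "(\<Sum>k\<in>I. m k) \<le> real N * B"
      using sum_bounded_above[of I m B] mb cardI by (auto simp: I_def)
    ultimately show ?thesis unfolding mbar_def using Npos by (simp add: field_simps)
  qed
  have SY0: "0 \<le> SY" unfolding SY_def by (intro sum_nonneg) simp
  have SYB: "SY \<le> real N * B^2"
  proof -
    have "SY \<le> (\<Sum>i\<in>I. B^2)" unfolding SY_def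
    proof (intro sum_mono)
      fix i assume "i \<in> I"
      then have "\<bar>y i\<bar> \<le> B" using mb[of i] mbar_b unfolding y_def I_def by auto
      then show "(y i)^2 \<le> B^2" by (metis abs_ge_zero power2_abs power_mono)
    qed
    then show ?thesis using cardI by simp
  qed
  have T0: "0 \<le> T" unfolding T_def using SY0 n_pos by simp
  have TB: "T \<le> B^2" unfolding T_def using SYB Nn n_pos B0
    by (simp add: field_simps) (meson mult_right_mono order.trans zero_le_power2)
  define c where "c = 1/(2*n^2)"
  have key: "c * ((\<Sum>i\<in>I. \<Sum>j\<in>I. (m i - m j)^2) - H - Dd) - T = - (T/n) - c*H - c*Dd"
  proof -
    have RN: "real N = n - 1" unfolding n_def by simp
    show ?thesis unfolding G c_def T_def RN using n_pos by (simp add: field_simps power2_eq_square)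
  qed
  have eqabs: "\<bar>- (T/n) - c*H - c*Dd\<bar> = T/n + c*H + c*Dd"
  proof -
    have "0 \<le> T/n" "0 \<le> c*H" "0 \<le> c*Dd" using T0 H0 Dd0 n_pos unfolding c_def by simp_all
    then show ?thesis by linarith
  qed
  have t1: "T/n \<le> B^2/n" using TB n_pos by (simp add: divide_right_mono)
  have t2: "c*H \<le> (3/2)*(B^2/n)"
  proof -
    have "c*H \<le> c*(3 * real N * B^2)" using HB unfolding c_def using n_pos by (simp add: divide_right_mono)
    also have "\<dots> \<le> c*(3 * n * B^2)" unfolding c_def using Nn B0 n_pos by (intro mult_left_mono mult_right_mono divide_right_mono) auto
    also have "\<dots> = (3/2)*(B^2/n)" unfolding c_def using n_pos by (simp add: field_simps power2_eq_square)
    finally show ?thesis .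
  qed
  have t3: "c*Dd \<le> (2/3)*D"
  proof -
    have D0: "0 \<le> D" using dbd[of 1] N by auto
    have "c*Dd \<le> c*((4/3) * real N^2 * D)" using DdB n_pos unfolding c_def by (intro mult_left_mono) auto
    also have "\<dots> \<le> c*((4/3) * n^2 * D)" unfolding c_def using Nn D0 n_pos
      by (intro mult_left_mono mult_right_mono) (auto intro: power_mono)
    also have "\<dots> = (2/3)*D" unfolding c_def using n_pos by (simp add: field_simps power2_eq_square)
    finally show ?thesis .
  qed
  have fin0: "\<bar>- (T/n) - c*H - c*Dd\<bar> \<le> B^2/n + (3/2)*(B^2/n) + (2/3)*D"
    using eqabs t1 t2 t3 by linarith
  have "0 \<le> B^2/n" "0 \<le> D" using n_pos dbd[of 1] N by auto
  with fin0 have "\<bar>- (T/n) - c*H - c*Dd\<bar> \<le> 3*(B^2/n) + D" by linarith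
  then have fin: "\<bar>- (T/n) - c*H - c*Dd\<bar> \<le> 3*B^2/n + D" by simp
  show ?thesis
    using fin key split unfolding c_def T_def SY_def y_def mbar_def n_def I_def P_def by simp
qed


locale setting =
  fixes n :: nat and f :: "real \<Rightarrow> real" and V :: "nat \<Rightarrow> real" and Mb e :: real
  assumes n2: "2 \<le> n" and Mb0: "0 \<le> Mb" and fb: "\<And>x. 0 \<le> x \<Longrightarrow> x \<le> 1 \<Longrightarrow> \<bar>f x\<bar> \<le> Mb"
    and Vb: "\<And>i. i \<in> {1..n} \<Longrightarrow> 0 \<le> V i \<and> V i \<le> Mb"
    and db: "\<And>i. i \<in> {1..n-1} \<Longrightarrow> \<bar>delta n f i\<bar> \<le> e"
begin

sublocale P: prob_space "noise_law n" by (rule noise_prob)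

definition R :: "nat \<Rightarrow> (nat \<Rightarrow> real) \<Rightarrow> real" where "R i \<omega> = diffR n f V \<omega> i"

lemma R_eq: "R i \<omega> = delta n f i + (- sqrt (V i)) * \<omega> i + sqrt (V (Suc i)) * \<omega> (Suc i)"
  unfolding R_def diffR_def obsY_def delta_def by (simp add: algebra_simps)

lemma n1: "1 \<le> n" using n2 by simp

lemma I_coords: "i \<in> {1..n-1} \<Longrightarrow> i \<in> {1..n} \<and> Suc i \<in> {1..n} \<and> i \<noteq> Suc i"
  by auto

lemma R_meas: "i \<in> {1..n-1} \<Longrightarrow> R i \<in> borel_measurable (noise_law n)"
proof -
  assume i: "i \<in> {1..n-1}"
  have c: "i \<in> {1..n}" "Suc i \<in> {1..n}" using i by auto
  note [measurable] = meas_coord[OF c(1)] meas_coord[OF c(2)]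
  show ?thesis unfolding R_eq[abs_def] by measurable
qed

lemma R_meas_Pi: "i \<in> A \<Longrightarrow> Suc i \<in> A \<Longrightarrow> R i \<in> borel_measurable (PiM A (\<lambda>_. std_normal))"
proof -
  assume i: "i \<in> A" "Suc i \<in> A"
  note [measurable] = comp_meas_Pi[OF i(1)] comp_meas_Pi[OF i(2)]
  show ?thesis unfolding R_eq[abs_def] by measurable
qed

lemma R_restrict: "i \<in> A \<Longrightarrow> Suc i \<in> A \<Longrightarrow> R i (restrict \<omega> A) = R i \<omega>"
  unfolding R_eq by simp

lemma R_pow_int: "i \<in> {1..n-1} \<Longrightarrow> integrable (noise_law n) (\<lambda>\<omega>. R i \<omega> ^ k)"
  unfolding R_eq using two_coord(1)[OF n1, of i "Suc i"] by auto

definition m :: "nat \<Rightarrow> real" where "m i = delta n f i ^ 2 + Wsum V i"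

lemma ER2: "i \<in> {1..n-1} \<Longrightarrow> integral\<^sup>L (noise_law n) (\<lambda>\<omega>. R i \<omega> ^ 2) = m i"
proof -
  assume i: "i \<in> {1..n-1}"
  then have v: "0 \<le> V i" "0 \<le> V (Suc i)" using Vb[of i] Vb[of "Suc i"] by auto
  have c: "i \<in> {1..n}" "Suc i \<in> {1..n}" "i \<noteq> Suc i" using i by auto
  show ?thesis unfolding R_eq two_coord_2[OF n1 c] using v
    by (simp add: m_def Wsum_def)
qed

lemma ER4: "i \<in> {1..n-1} \<Longrightarrow> integral\<^sup>L (noise_law n) (\<lambda>\<omega>. R i \<omega> ^ 4) = 3 * m i ^ 2 - 2 * delta n f i ^ 4"
proof -
  assume i: "i \<in> {1..n-1}"
  then have v: "0 \<le> V i" "0 \<le> V (Suc i)" using Vb[of i] Vb[of "Suc i"] by auto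
  have c: "i \<in> {1..n}" "Suc i \<in> {1..n}" "i \<noteq> Suc i" using i by auto
  show ?thesis unfolding R_eq two_coord_4[OF n1 c] using v
    by (simp add: m_def Wsum_def power2_eq_square power4_eq_xxxx algebra_simps)
qed

end

context setting begin

abbreviation "Ii \<equiv> {1..n-1}"

lemma delta_2M: "i \<in> Ii \<Longrightarrow> \<bar>delta n f i\<bar> \<le> 2 * Mb"
proof -
  assume i: "i \<in> Ii"
  have "0 \<le> real (Suc i) / real n" "real (Suc i) / real n \<le> 1" "0 \<le> real i / real n" "real i / real n \<le> 1"
    using i n2 by auto
  then have "\<bar>f (real (Suc i) / real n)\<bar> \<le> Mb" "\<bar>f (real i / real n)\<bar> \<le> Mb" using fb by auto
  then show ?thesis unfolding delta_def by linarith
qed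

definition K8 :: real where "K8 = 3^8 * ((2*Mb)^8 + 210*Mb^4)"

lemma ER8: "i \<in> Ii \<Longrightarrow> integral\<^sup>L (noise_law n) (\<lambda>\<omega>. R i \<omega> ^ 8) \<le> K8"
proof -
  assume i: "i \<in> Ii"
  have c: "i \<in> {1..n}" "Suc i \<in> {1..n}" using i by auto
  note [measurable] = meas_coord[OF c(1)] meas_coord[OF c(2)]
  define dd where "dd = delta n f i"
  define a where "a = sqrt (V (Suc i))"
  define b where "b = sqrt (V i)"
  have v: "0 \<le> V i" "V i \<le> Mb" "0 \<le> V (Suc i)" "V (Suc i) \<le> Mb" using Vb c by auto
  have b8: "b^8 = V i ^ 4" unfolding b_def using v
    by (metis (no_types, lifting) num_double numeral_times_numeral power_mult real_sqrt_pow2)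
  have a8: "a^8 = V (Suc i) ^ 4" unfolding a_def using v
    by (metis (no_types, lifting) num_double numeral_times_numeral power_mult real_sqrt_pow2)
  define B where "B \<omega> = 3^8 * (dd^8 + b^8 * \<omega> i ^ 8 + a^8 * \<omega> (Suc i) ^ 8)" for \<omega> :: "nat \<Rightarrow> real"
  have i8: "integrable (noise_law n) (\<lambda>\<omega>. \<omega> u ^ 8)" "integral\<^sup>L (noise_law n) (\<lambda>\<omega>. \<omega> u ^ 8) = 105"
    if "u \<in> {1..n}" for u
    using coord_integrable[OF that _ std_normal_integrable_pow[of 8]] coord_integral[OF that, of "\<lambda>x. x^8"]
      mom_vals(6) unfolding mom_def by auto
  have Bint: "integrable (noise_law n) B" unfolding B_def using i8 c by auto
  have BE: "integral\<^sup>L (noise_law n) B = 3^8 * (dd^8 + b^8 * 105 + a^8 * 105)"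
    unfolding B_def using i8 c by (simp add: Bochner_Integration.integral_add P.prob_space)
  have "integral\<^sup>L (noise_law n) (\<lambda>\<omega>. R i \<omega> ^ 8) \<le> integral\<^sup>L (noise_law n) B"
  proof (rule integral_mono[OF R_pow_int[OF i] Bint])
    fix \<omega> :: "nat \<Rightarrow> real"
    have "R i \<omega> ^ 8 \<le> 3^8 * (dd^8 + ((-b) * \<omega> i)^8 + (a * \<omega> (Suc i))^8)"
      unfolding R_eq dd_def a_def b_def by (rule pow8_le)
    then show "R i \<omega> ^ 8 \<le> B \<omega>" unfolding B_def by (simp add: power_mult_distrib)
  qed
  also have "\<dots> \<le> K8"
  proof -
    have "dd^8 \<le> (2*Mb)^8" unfolding dd_def using delta_2M[OF i]
      by (metis abs_ge_zero power_even_abs_numeral even_numeral power_mono)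
    moreover have "b^8 \<le> Mb^4" "a^8 \<le> Mb^4" unfolding a8 b8 using v by (auto intro: power_mono)
    ultimately show ?thesis unfolding BE K8_def by simp
  qed
  finally show ?thesis .
qed

definition hh :: "nat \<Rightarrow> nat \<Rightarrow> (nat \<Rightarrow> real) \<Rightarrow> real" where
  "hh i j \<omega> = (1/3)*(R i \<omega>^4 + R j \<omega>^4) - 2*R i \<omega>^2*R j \<omega>^2"

definition mu :: "nat \<Rightarrow> nat \<Rightarrow> real" where "mu i j = integral\<^sup>L (noise_law n) (hh i j)"

definition Pr :: "nat \<Rightarrow> nat \<Rightarrow> bool" where "Pr i j = (2 \<le> \<bar>int i - int j\<bar>)"

definition X :: "nat \<Rightarrow> nat \<Rightarrow> (nat \<Rightarrow> real) \<Rightarrow> real" where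
  "X i j \<omega> = (if Pr i j then hh i j \<omega> - mu i j else 0)"

lemma hh_meas: "i \<in> Ii \<Longrightarrow> j \<in> Ii \<Longrightarrow> hh i j \<in> borel_measurable (noise_law n)"
proof -
  assume ij: "i \<in> Ii" "j \<in> Ii"
  note [measurable] = R_meas[OF ij(1)] R_meas[OF ij(2)]
  show ?thesis unfolding hh_def[abs_def] by measurable
qed

lemma hh_int: "i \<in> Ii \<Longrightarrow> j \<in> Ii \<Longrightarrow> integrable (noise_law n) (hh i j)"
proof -
  assume ij: "i \<in> Ii" "j \<in> Ii"
  note [measurable] = R_meas[OF ij(1)] R_meas[OF ij(2)]
  have "integrable (noise_law n) (\<lambda>\<omega>. R i \<omega>^2 * R j \<omega>^2)"
    by (rule integrable_prod_sq) (auto simp flip: power_mult intro: R_pow_int ij)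
  then show ?thesis unfolding hh_def[abs_def] using R_pow_int[OF ij(1)] R_pow_int[OF ij(2)]
    by (auto simp: mult.assoc)
qed

lemma hh_sq: "i \<in> Ii \<Longrightarrow> j \<in> Ii \<Longrightarrow> integrable (noise_law n) (\<lambda>\<omega>. hh i j \<omega> ^ 2)
   \<and> integral\<^sup>L (noise_law n) (\<lambda>\<omega>. hh i j \<omega> ^ 2) \<le> 8 * K8"
proof -
  assume ij: "i \<in> Ii" "j \<in> Ii"
  note [measurable] = R_meas[OF ij(1)] R_meas[OF ij(2)] hh_meas[OF ij]
  have bi: "integrable (noise_law n) (\<lambda>\<omega>. 4 * (R i \<omega>^8 + R j \<omega>^8))"
    using R_pow_int[OF ij(1)] R_pow_int[OF ij(2)] by auto
  have le: "hh i j \<omega> ^ 2 \<le> 4 * (R i \<omega>^8 + R j \<omega>^8)" for \<omega>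
    unfolding hh_def by (rule hh_sq_le)
  have int: "integrable (noise_law n) (\<lambda>\<omega>. hh i j \<omega> ^ 2)"
  proof (rule Bochner_Integration.integrable_bound[OF bi])
    show "(\<lambda>\<omega>. hh i j \<omega> ^ 2) \<in> borel_measurable (noise_law n)" by measurable
    show "AE \<omega> in noise_law n. norm (hh i j \<omega> ^ 2) \<le> norm (4 * (R i \<omega>^8 + R j \<omega>^8))"
      using le by (auto intro!: AE_I2 simp: zero_le_even_power)
  qed
  have "integral\<^sup>L (noise_law n) (\<lambda>\<omega>. hh i j \<omega> ^ 2) \<le> integral\<^sup>L (noise_law n) (\<lambda>\<omega>. 4 * (R i \<omega>^8 + R j \<omega>^8))"
    by (rule integral_mono[OF int bi le])
  also have "\<dots> = 4 * (integral\<^sup>L (noise_law n) (\<lambda>\<omega>. R i \<omega>^8) + integral\<^sup>L (noise_law n) (\<lambda>\<omega>. R j \<omega>^8))"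
    using R_pow_int[OF ij(1)] R_pow_int[OF ij(2)] by (simp add: Bochner_Integration.integral_add)
  also have "\<dots> \<le> 8 * K8" using ER8[OF ij(1)] ER8[OF ij(2)] by simp
  finally show ?thesis using int by simp
qed

end

context setting begin

lemma X_meas: "i \<in> Ii \<Longrightarrow> j \<in> Ii \<Longrightarrow> X i j \<in> borel_measurable (noise_law n)"
proof -
  assume ij: "i \<in> Ii" "j \<in> Ii"
  note [measurable] = hh_meas[OF ij]
  show ?thesis unfolding X_def[abs_def] by measurable
qed

lemma X_meas_Pi: "i \<in> A \<Longrightarrow> Suc i \<in> A \<Longrightarrow> j \<in> A \<Longrightarrow> Suc j \<in> A \<Longrightarrow> X i j \<in> borel_measurable (PiM A (\<lambda>_. std_normal))"
proof -
  assume a: "i \<in> A" "Suc i \<in> A" "j \<in> A" "Suc j \<in> A"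
  note [measurable] = R_meas_Pi[OF a(1,2)] R_meas_Pi[OF a(3,4)]
  show ?thesis unfolding X_def[abs_def] hh_def by measurable
qed

lemma X_restrict: "i \<in> A \<Longrightarrow> Suc i \<in> A \<Longrightarrow> j \<in> A \<Longrightarrow> Suc j \<in> A \<Longrightarrow> X i j (restrict \<omega> A) = X i j \<omega>"
  unfolding X_def hh_def by (simp add: R_restrict)

lemma X_int: "i \<in> Ii \<Longrightarrow> j \<in> Ii \<Longrightarrow> integrable (noise_law n) (X i j)"
proof -
  assume ij: "i \<in> Ii" "j \<in> Ii"
  have h: "integrable (noise_law n) (hh i j)" by (rule hh_int[OF ij])
  show ?thesis
  proof (cases "Pr i j")
    case True
    have "integrable (noise_law n) (\<lambda>\<omega>. hh i j \<omega> - mu i j)" using h by auto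
    then show ?thesis unfolding X_def[abs_def] using True by simp
  qed (simp add: X_def[abs_def])
qed

lemma EX0: "i \<in> Ii \<Longrightarrow> j \<in> Ii \<Longrightarrow> integral\<^sup>L (noise_law n) (X i j) = 0"
proof -
  assume ij: "i \<in> Ii" "j \<in> Ii"
  have h: "integrable (noise_law n) (hh i j)" by (rule hh_int[OF ij])
  show ?thesis
  proof (cases "Pr i j")
    case True
    have "integral\<^sup>L (noise_law n) (\<lambda>\<omega>. hh i j \<omega> - mu i j) = 0"
      using h by (simp add: Bochner_Integration.integral_diff P.prob_space mu_def)
    then show ?thesis unfolding X_def[abs_def] using True by simp
  qed (simp add: X_def[abs_def])
qed

lemma X_sq: "i \<in> Ii \<Longrightarrow> j \<in> Ii \<Longrightarrow> integrable (noise_law n) (\<lambda>\<omega>. X i j \<omega> ^ 2)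
   \<and> integral\<^sup>L (noise_law n) (\<lambda>\<omega>. X i j \<omega> ^ 2) \<le> 8 * K8"
proof -
  assume ij: "i \<in> Ii" "j \<in> Ii"
  have K0: "0 \<le> K8" unfolding K8_def using Mb0 by simp
  show ?thesis
  proof (cases "Pr i j")
    case False then show ?thesis unfolding X_def using K0 by simp
  next
    case True
    have e: "X i j \<omega> ^ 2 = hh i j \<omega> ^ 2 - 2 * mu i j * hh i j \<omega> + mu i j ^ 2" for \<omega>
      unfolding X_def using True by (simp add: power2_diff)
    have h2: "integrable (noise_law n) (\<lambda>\<omega>. hh i j \<omega> ^ 2)" "integral\<^sup>L (noise_law n) (\<lambda>\<omega>. hh i j \<omega> ^ 2) \<le> 8 * K8"
      using hh_sq[OF ij] by auto
    have h1: "integrable (noise_law n) (hh i j)" using hh_int[OF ij] .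
    have "integral\<^sup>L (noise_law n) (\<lambda>\<omega>. X i j \<omega> ^ 2) = integral\<^sup>L (noise_law n) (\<lambda>\<omega>. hh i j \<omega> ^ 2) - mu i j ^ 2"
      unfolding e using h1 h2
      by (simp add: Bochner_Integration.integral_add Bochner_Integration.integral_diff P.prob_space mu_def power2_eq_square)
    also have "\<dots> \<le> 8 * K8" using h2 by (smt (verit) zero_le_power2)
    finally show ?thesis unfolding e using h1 h2 by auto
  qed
qed

lemma XX_int: "i \<in> Ii \<Longrightarrow> j \<in> Ii \<Longrightarrow> k \<in> Ii \<Longrightarrow> l \<in> Ii \<Longrightarrow>
    integrable (noise_law n) (\<lambda>\<omega>. X i j \<omega> * X k l \<omega>)"
  by (rule integrable_prod_sq) (use X_sq X_meas in auto)

lemma XX_bound: "i \<in> Ii \<Longrightarrow> j \<in> Ii \<Longrightarrow> k \<in> Ii \<Longrightarrow> l \<in> Ii \<Longrightarrow>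
    \<bar>integral\<^sup>L (noise_law n) (\<lambda>\<omega>. X i j \<omega> * X k l \<omega>)\<bar> \<le> 16 * K8"
proof -
  assume ij: "i \<in> Ii" "j \<in> Ii" "k \<in> Ii" "l \<in> Ii"
  have s1: "integrable (noise_law n) (\<lambda>\<omega>. X i j \<omega> ^ 2)" "integral\<^sup>L (noise_law n) (\<lambda>\<omega>. X i j \<omega> ^ 2) \<le> 8 * K8"
    using X_sq[OF ij(1,2)] by auto
  have s2: "integrable (noise_law n) (\<lambda>\<omega>. X k l \<omega> ^ 2)" "integral\<^sup>L (noise_law n) (\<lambda>\<omega>. X k l \<omega> ^ 2) \<le> 8 * K8"
    using X_sq[OF ij(3,4)] by auto
  have "\<bar>integral\<^sup>L (noise_law n) (\<lambda>\<omega>. X i j \<omega> * X k l \<omega>)\<bar> \<le> integral\<^sup>L (noise_law n) (\<lambda>\<omega>. norm (X i j \<omega> * X k l \<omega>))"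
    using integral_norm_bound[of "noise_law n" "\<lambda>\<omega>. X i j \<omega> * X k l \<omega>"] by simp
  also have "\<dots> \<le> integral\<^sup>L (noise_law n) (\<lambda>\<omega>. X i j \<omega> ^ 2 + X k l \<omega> ^ 2)"
    by (rule integral_mono) (use XX_int[OF ij] s1 s2 abs_mult_le_sq in auto)
  also have "\<dots> \<le> 16 * K8" using s1 s2 by (simp add: Bochner_Integration.integral_add)
  finally show ?thesis .
qed

lemma XX_zero:
  assumes ij: "i \<in> Ii" "j \<in> Ii" "k \<in> Ii" "l \<in> Ii"
    and far: "2 \<le> \<bar>int i - int k\<bar>" "2 \<le> \<bar>int i - int l\<bar>" "2 \<le> \<bar>int j - int k\<bar>" "2 \<le> \<bar>int j - int l\<bar>"
  shows "integral\<^sup>L (noise_law n) (\<lambda>\<omega>. X i j \<omega> * X k l \<omega>) = 0"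
proof -
  define A where "A = {i, Suc i, j, Suc j}"
  define B where "B = {k, Suc k, l, Suc l}"
  have AB: "A \<subseteq> {1..n}" "B \<subseteq> {1..n}" "A \<inter> B = {}"
    using ij far unfolding A_def B_def by auto
  have gm: "X i j \<in> borel_measurable (PiM A (\<lambda>_. std_normal))" by (rule X_meas_Pi) (auto simp: A_def)
  have hm: "X k l \<in> borel_measurable (PiM B (\<lambda>_. std_normal))" by (rule X_meas_Pi) (auto simp: B_def)
  have rA: "X i j (restrict \<omega> A) = X i j \<omega>" for \<omega> by (rule X_restrict) (auto simp: A_def)
  have rB: "X k l (restrict \<omega> B) = X k l \<omega>" for \<omega> by (rule X_restrict) (auto simp: B_def)
  have "integral\<^sup>L (noise_law n) (\<lambda>\<omega>. X i j (restrict \<omega> A) * X k l (restrict \<omega> B))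
     = integral\<^sup>L (noise_law n) (\<lambda>\<omega>. X i j (restrict \<omega> A)) * integral\<^sup>L (noise_law n) (\<lambda>\<omega>. X k l (restrict \<omega> B))"
    by (rule indep_blocks[OF n1 AB gm hm]) (simp_all add: rA rB X_int[OF ij(1,2)] X_int[OF ij(3,4)])
  then show ?thesis using EX0[OF ij(1,2)] by (simp add: rA rB)
qed

end

lemma int_sum4:
  fixes G :: "'i \<Rightarrow> 'i \<Rightarrow> 'i \<Rightarrow> 'i \<Rightarrow> 'a \<Rightarrow> real"
  assumes G: "\<And>i j k l. i\<in>I \<Longrightarrow> j\<in>I \<Longrightarrow> k\<in>I \<Longrightarrow> l\<in>I \<Longrightarrow> integrable M (G i j k l)"
  shows "integral\<^sup>L M (\<lambda>\<omega>. \<Sum>i\<in>I. \<Sum>j\<in>I. \<Sum>k\<in>I. \<Sum>l\<in>I. G i j k l \<omega>)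
    = (\<Sum>i\<in>I. \<Sum>j\<in>I. \<Sum>k\<in>I. \<Sum>l\<in>I. integral\<^sup>L M (G i j k l))"
proof -
  have i3: "integrable M (\<lambda>\<omega>. \<Sum>l\<in>I. G i j k l \<omega>)" if "i\<in>I" "j\<in>I" "k\<in>I" for i j k
    by (rule Bochner_Integration.integrable_sum) (rule G[OF that])
  have i2: "integrable M (\<lambda>\<omega>. \<Sum>k\<in>I. \<Sum>l\<in>I. G i j k l \<omega>)" if "i\<in>I" "j\<in>I" for i j
    by (rule Bochner_Integration.integrable_sum) (rule i3[OF that])
  have i1: "integrable M (\<lambda>\<omega>. \<Sum>j\<in>I. \<Sum>k\<in>I. \<Sum>l\<in>I. G i j k l \<omega>)" if "i\<in>I" for i
    by (rule Bochner_Integration.integrable_sum) (rule i2[OF that])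
  have a3: "integral\<^sup>L M (\<lambda>\<omega>. \<Sum>l\<in>I. G i j k l \<omega>) = (\<Sum>l\<in>I. integral\<^sup>L M (G i j k l))" if "i\<in>I" "j\<in>I" "k\<in>I" for i j k
    by (rule Bochner_Integration.integral_sum) (rule G[OF that])
  have a2: "integral\<^sup>L M (\<lambda>\<omega>. \<Sum>k\<in>I. \<Sum>l\<in>I. G i j k l \<omega>) = (\<Sum>k\<in>I. \<Sum>l\<in>I. integral\<^sup>L M (G i j k l))" if "i\<in>I" "j\<in>I" for i j
  proof -
    have "integral\<^sup>L M (\<lambda>\<omega>. \<Sum>k\<in>I. \<Sum>l\<in>I. G i j k l \<omega>) = (\<Sum>k\<in>I. integral\<^sup>L M (\<lambda>\<omega>. \<Sum>l\<in>I. G i j k l \<omega>))"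
      by (rule Bochner_Integration.integral_sum) (rule i3[OF that])
    also have "\<dots> = (\<Sum>k\<in>I. \<Sum>l\<in>I. integral\<^sup>L M (G i j k l))" by (rule sum.cong) (auto simp: a3 that)
    finally show ?thesis .
  qed
  have a1: "integral\<^sup>L M (\<lambda>\<omega>. \<Sum>j\<in>I. \<Sum>k\<in>I. \<Sum>l\<in>I. G i j k l \<omega>) = (\<Sum>j\<in>I. \<Sum>k\<in>I. \<Sum>l\<in>I. integral\<^sup>L M (G i j k l))" if "i\<in>I" for i
  proof -
    have "integral\<^sup>L M (\<lambda>\<omega>. \<Sum>j\<in>I. \<Sum>k\<in>I. \<Sum>l\<in>I. G i j k l \<omega>) = (\<Sum>j\<in>I. integral\<^sup>L M (\<lambda>\<omega>. \<Sum>k\<in>I. \<Sum>l\<in>I. G i j k l \<omega>))"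
      by (rule Bochner_Integration.integral_sum) (rule i2[OF that])
    also have "\<dots> = (\<Sum>j\<in>I. \<Sum>k\<in>I. \<Sum>l\<in>I. integral\<^sup>L M (G i j k l))" by (rule sum.cong) (auto simp: a2 that)
    finally show ?thesis .
  qed
  have "integral\<^sup>L M (\<lambda>\<omega>. \<Sum>i\<in>I. \<Sum>j\<in>I. \<Sum>k\<in>I. \<Sum>l\<in>I. G i j k l \<omega>) = (\<Sum>i\<in>I. integral\<^sup>L M (\<lambda>\<omega>. \<Sum>j\<in>I. \<Sum>k\<in>I. \<Sum>l\<in>I. G i j k l \<omega>))"
    by (rule Bochner_Integration.integral_sum) (rule i1)
  also have "\<dots> = (\<Sum>i\<in>I. \<Sum>j\<in>I. \<Sum>k\<in>I. \<Sum>l\<in>I. integral\<^sup>L M (G i j k l))" by (rule sum.cong) (auto simp: a1)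
  finally show ?thesis .
qed

context setting begin

lemma ERR:
  assumes ij: "i \<in> Ii" "j \<in> Ii" "Pr i j"
  shows "integral\<^sup>L (noise_law n) (\<lambda>\<omega>. R i \<omega> ^ 2 * R j \<omega> ^ 2) = m i * m j"
proof -
  define A where "A = {i, Suc i}"
  define B where "B = {j, Suc j}"
  have AB: "A \<subseteq> {1..n}" "B \<subseteq> {1..n}" "A \<inter> B = {}"
    using ij unfolding A_def B_def Pr_def by auto
  have gm: "(\<lambda>\<omega>. R i \<omega> ^ 2) \<in> borel_measurable (PiM A (\<lambda>_. std_normal))"
  proof -
    note [measurable] = R_meas_Pi[of i A]
    show ?thesis by measurable (auto simp: A_def)
  qed
  have hm: "(\<lambda>\<omega>. R j \<omega> ^ 2) \<in> borel_measurable (PiM B (\<lambda>_. std_normal))"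
  proof -
    note [measurable] = R_meas_Pi[of j B]
    show ?thesis by measurable (auto simp: B_def)
  qed
  have rA: "R i (restrict \<omega> A) = R i \<omega>" for \<omega> by (rule R_restrict) (auto simp: A_def)
  have rB: "R j (restrict \<omega> B) = R j \<omega>" for \<omega> by (rule R_restrict) (auto simp: B_def)
  have "integral\<^sup>L (noise_law n) (\<lambda>\<omega>. R i (restrict \<omega> A) ^ 2 * R j (restrict \<omega> B) ^ 2)
     = integral\<^sup>L (noise_law n) (\<lambda>\<omega>. R i (restrict \<omega> A) ^ 2) * integral\<^sup>L (noise_law n) (\<lambda>\<omega>. R j (restrict \<omega> B) ^ 2)"
    by (rule indep_blocks[OF n1 AB gm hm]) (simp_all add: rA rB R_pow_int[OF ij(1)] R_pow_int[OF ij(2)])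
  then show ?thesis using ER2[OF ij(1)] ER2[OF ij(2)] by (simp add: rA rB)
qed

lemma mu_eq:
  assumes ij: "i \<in> Ii" "j \<in> Ii" "Pr i j"
  shows "mu i j = (m i - m j)^2 - (2/3) * (delta n f i ^ 4 + delta n f j ^ 4)"
proof -
  have e: "hh i j \<omega> = (1/3) * (R i \<omega>^4 + R j \<omega>^4) - 2 * (R i \<omega>^2 * R j \<omega>^2)" for \<omega>
    unfolding hh_def by (simp add: mult.assoc)
  note [measurable] = R_meas[OF ij(1)] R_meas[OF ij(2)]
  have i1: "integrable (noise_law n) (\<lambda>\<omega>. R i \<omega>^2 * R j \<omega>^2)"
    by (rule integrable_prod_sq) (auto simp flip: power_mult intro: R_pow_int R_meas ij)
  have "mu i j = (1/3) * (integral\<^sup>L (noise_law n) (\<lambda>\<omega>. R i \<omega>^4) + integral\<^sup>L (noise_law n) (\<lambda>\<omega>. R j \<omega>^4))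
      - 2 * integral\<^sup>L (noise_law n) (\<lambda>\<omega>. R i \<omega>^2 * R j \<omega>^2)"
    unfolding mu_def e using i1 R_pow_int[OF ij(1)] R_pow_int[OF ij(2)]
    by (simp add: Bochner_Integration.integral_add Bochner_Integration.integral_diff)
  also have "\<dots> = (m i - m j)^2 - (2/3) * (delta n f i ^ 4 + delta n f j ^ 4)"
    unfolding ERR[OF ij] ER4[OF ij(1)] ER4[OF ij(2)] by (simp add: power2_diff algebra_simps power2_eq_square)
  finally show ?thesis .
qed

definition S :: "(nat \<Rightarrow> real) \<Rightarrow> real" where "S \<omega> = (\<Sum>i\<in>Ii. \<Sum>j\<in>Ii. X i j \<omega>)"

lemma near_sum:
  fixes i j :: nat
  shows "(\<Sum>k\<in>Ii. \<Sum>l\<in>Ii. (if \<bar>int i - int k\<bar> \<le> 1 \<or> \<bar>int i - int l\<bar> \<le> 1 \<or> \<bar>int j - int k\<bar> \<le> 1 \<or> \<bar>int j - int l\<bar> \<le> 1 then 1 else 0 :: real))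
     \<le> 12 * real (n-1)"
proof -
  define ind where "ind x y = (if \<bar>int x - int y\<bar> \<le> 1 then 1 else 0 :: real)" for x y
  have c: "(\<Sum>k\<in>Ii. ind x k) \<le> 3" for x unfolding ind_def by (rule cnt1)
  have "(\<Sum>k\<in>Ii. \<Sum>l\<in>Ii. (if \<bar>int i - int k\<bar> \<le> 1 \<or> \<bar>int i - int l\<bar> \<le> 1 \<or> \<bar>int j - int k\<bar> \<le> 1 \<or> \<bar>int j - int l\<bar> \<le> 1 then 1 else 0 :: real))
     \<le> (\<Sum>k\<in>Ii. \<Sum>l\<in>Ii. ind i k + ind i l + ind j k + ind j l)"
    by (intro sum_mono) (auto simp: ind_def)
  also have "\<dots> = (\<Sum>k\<in>Ii. real (n-1) * ind i k + (\<Sum>l\<in>Ii. ind i l) + real (n-1) * ind j k + (\<Sum>l\<in>Ii. ind j l))"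
    by (simp add: sum.distrib)
  also have "\<dots> \<le> (\<Sum>k\<in>Ii. real (n-1) * ind i k + 3 + real (n-1) * ind j k + 3)"
    by (intro sum_mono add_mono order.refl c)
  also have "\<dots> = real (n-1) * (\<Sum>k\<in>Ii. ind i k) + real (n-1) * (\<Sum>k\<in>Ii. ind j k) + 6 * real (n-1)"
    by (simp add: sum.distrib sum_distrib_left)
  also have "\<dots> \<le> real (n-1) * 3 + real (n-1) * 3 + 6 * real (n-1)"
    by (intro add_mono mult_left_mono c order.refl) auto
  finally show ?thesis by simp
qed

lemma ES2:
  shows "integrable (noise_law n) (\<lambda>\<omega>. S \<omega> ^ 2)"
    "integral\<^sup>L (noise_law n) (\<lambda>\<omega>. S \<omega> ^ 2) \<le> 192 * K8 * real (n-1)^3"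
proof -
  have e: "S \<omega> ^ 2 = (\<Sum>i\<in>Ii. \<Sum>j\<in>Ii. \<Sum>k\<in>Ii. \<Sum>l\<in>Ii. X i j \<omega> * X k l \<omega>)" for \<omega>
    unfolding S_def power2_eq_square sum_distrib_right unfolding sum_distrib_left ..
  have ii: "integrable (noise_law n) (\<lambda>\<omega>. X i j \<omega> * X k l \<omega>)" if "i \<in> Ii" "j \<in> Ii" "k \<in> Ii" "l \<in> Ii" for i j k l
    using XX_int that by blast
  show "integrable (noise_law n) (\<lambda>\<omega>. S \<omega> ^ 2)" unfolding e by (intro Bochner_Integration.integrable_sum ii)
  have "integral\<^sup>L (noise_law n) (\<lambda>\<omega>. S \<omega> ^ 2)
      = (\<Sum>i\<in>Ii. \<Sum>j\<in>Ii. \<Sum>k\<in>Ii. \<Sum>l\<in>Ii. integral\<^sup>L (noise_law n) (\<lambda>\<omega>. X i j \<omega> * X k l \<omega>))"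
    unfolding e by (rule int_sum4[where G="\<lambda>i j k l \<omega>. X i j \<omega> * X k l \<omega>"]) (rule ii)
  also have "\<dots> \<le> (\<Sum>i\<in>Ii. \<Sum>j\<in>Ii. \<Sum>k\<in>Ii. \<Sum>l\<in>Ii. 16 * K8 *
      (if \<bar>int i - int k\<bar> \<le> 1 \<or> \<bar>int i - int l\<bar> \<le> 1 \<or> \<bar>int j - int k\<bar> \<le> 1 \<or> \<bar>int j - int l\<bar> \<le> 1 then 1 else 0))"
  proof (intro sum_mono)
    fix i j k l assume ijkl: "i \<in> Ii" "j \<in> Ii" "k \<in> Ii" "l \<in> Ii"
    show "integral\<^sup>L (noise_law n) (\<lambda>\<omega>. X i j \<omega> * X k l \<omega>) \<le> 16 * K8 *
      (if \<bar>int i - int k\<bar> \<le> 1 \<or> \<bar>int i - int l\<bar> \<le> 1 \<or> \<bar>int j - int k\<bar> \<le> 1 \<or> \<bar>int j - int l\<bar> \<le> 1 then 1 else 0)"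
    proof (cases "\<bar>int i - int k\<bar> \<le> 1 \<or> \<bar>int i - int l\<bar> \<le> 1 \<or> \<bar>int j - int k\<bar> \<le> 1 \<or> \<bar>int j - int l\<bar> \<le> 1")
      case True then show ?thesis using XX_bound[OF ijkl] by simp
    next
      case False then show ?thesis using XX_zero[OF ijkl] by simp
    qed
  qed
  also have "\<dots> = (\<Sum>i\<in>Ii. \<Sum>j\<in>Ii. 16 * K8 * (\<Sum>k\<in>Ii. \<Sum>l\<in>Ii.
      (if \<bar>int i - int k\<bar> \<le> 1 \<or> \<bar>int i - int l\<bar> \<le> 1 \<or> \<bar>int j - int k\<bar> \<le> 1 \<or> \<bar>int j - int l\<bar> \<le> 1 then 1 else 0)))"
    by (simp add: sum_distrib_left)
  also have "\<dots> \<le> (\<Sum>i\<in>Ii. \<Sum>j\<in>Ii. 16 * K8 * (12 * real (n-1)))"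
    by (intro sum_mono mult_left_mono near_sum) (simp add: K8_def Mb0)
  also have "\<dots> = 192 * K8 * real (n-1)^3" by (simp add: power3_eq_cube)
  finally show "integral\<^sup>L (noise_law n) (\<lambda>\<omega>. S \<omega> ^ 2) \<le> 192 * K8 * real (n-1)^3" .
qed

end

context setting begin

definition Mm :: real where "Mm = 4*Mb^2 + 2*Mb"

lemma m_bounds: "i \<in> Ii \<Longrightarrow> 0 \<le> m i \<and> m i \<le> Mm"
proof -
  assume i: "i \<in> Ii"
  have v: "0 \<le> V i" "V i \<le> Mb" "0 \<le> V (Suc i)" "V (Suc i) \<le> Mb" using Vb i by auto
  have "\<bar>delta n f i\<bar>^2 \<le> (2*Mb)^2" using delta_2M[OF i] by (intro power_mono) auto
  then have "delta n f i ^2 \<le> 4*Mb^2" by (simp add: power_mult_distrib)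
  then show ?thesis using v unfolding m_def Wsum_def Mm_def by simp
qed

lemma d_bounds: "i \<in> Ii \<Longrightarrow> 0 \<le> delta n f i ^ 4 \<and> delta n f i ^ 4 \<le> e^4"
proof -
  assume i: "i \<in> Ii"
  have "\<bar>delta n f i\<bar>^4 \<le> e^4" using db[OF i] by (intro power_mono) auto
  then show ?thesis by (simp add: power_even_abs_numeral)
qed

lemma That_eq: "That n f V \<xi> = 1/(2*real n^2) * (S \<xi> + (\<Sum>i\<in>Ii. \<Sum>j\<in>Ii. if Pr i j then mu i j else 0))"
proof -
  have "That n f V \<xi> = 1/(2*real n^2) * (\<Sum>i\<in>Ii. \<Sum>j\<in>Ii. if Pr i j then hh i j \<xi> else 0)"
    unfolding That_def hh_def R_def Pr_def by (simp only: sum.inter_filter[OF finite_atLeastAtMost])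
  also have "(\<Sum>i\<in>Ii. \<Sum>j\<in>Ii. if Pr i j then hh i j \<xi> else 0) = (\<Sum>i\<in>Ii. \<Sum>j\<in>Ii. X i j \<xi> + (if Pr i j then mu i j else 0))"
    unfolding X_def by (intro sum.cong refl) auto
  also have "\<dots> = S \<xi> + (\<Sum>i\<in>Ii. \<Sum>j\<in>Ii. if Pr i j then mu i j else 0)"
    unfolding S_def by (simp add: sum.distrib)
  finally show ?thesis .
qed

lemma bias:
  "\<bar>1/(2*real n^2) * (\<Sum>i\<in>Ii. \<Sum>j\<in>Ii. if Pr i j then mu i j else 0) - Ttarget n f V\<bar> \<le> 3*Mm^2/real n + e^4"
proof -
  define N where "N = n - 1"
  have N1: "1 \<le> N" and nN: "n = N + 1" using n2 unfolding N_def by auto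
  have IN: "Ii = {1..N}" unfolding N_def ..
  have B: "\<bar>1/(2*real (N+1)^2) * (\<Sum>i\<in>{1..N}. \<Sum>j\<in>{1..N}. if 2 \<le> \<bar>int i - int j\<bar> then (m i - m j)^2 - (2/3)*(delta n f i ^ 4 + delta n f j ^ 4) else 0)
     - (1 / real (N+1)) * (\<Sum>i\<in>{1..N}. (m i - (\<Sum>k\<in>{1..N}. m k)/real N)^2)\<bar> \<le> 3*Mm^2/real (N+1) + e^4"
    by (rule bias_bound[OF N1]) (use m_bounds d_bounds IN in auto)
  have e1: "(\<Sum>i\<in>Ii. \<Sum>j\<in>Ii. if Pr i j then mu i j else 0) =
     (\<Sum>i\<in>{1..N}. \<Sum>j\<in>{1..N}. if 2 \<le> \<bar>int i - int j\<bar> then (m i - m j)^2 - (2/3)*(delta n f i ^ 4 + delta n f j ^ 4) else 0)"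
    unfolding IN[symmetric] by (intro sum.cong refl) (auto simp: mu_eq Pr_def)
  have e2: "Ttarget n f V = (1 / real n) * (\<Sum>i\<in>{1..N}. (m i - (\<Sum>k\<in>{1..N}. m k)/real N)^2)"
    unfolding Ttarget_def Let_def m_def N_def
    by (simp add: sum.distrib add_divide_distrib algebra_simps)
  have rn: "real (N+1) = real n" using nN by simp
  show ?thesis using B unfolding e1 e2 rn by simp
qed

theorem main_bound:
  "(\<integral>\<^sup>+ \<xi>. ennreal ((That n f V \<xi> - Ttarget n f V)\<^sup>2) \<partial>noise_law n)
     \<le> ennreal ((96*K8 + 36*Mm^4)/real n + 4*e^8)"
proof -
  define c where "c = 1/(2*real n^2)"
  define \<beta> where "\<beta> = c * (\<Sum>i\<in>Ii. \<Sum>j\<in>Ii. if Pr i j then mu i j else 0) - Ttarget n f V"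
  have npos: "0 < real n" using n2 by simp
  have pt: "(That n f V \<xi> - Ttarget n f V)\<^sup>2 \<le> 2*c^2 * S \<xi> ^ 2 + 2*\<beta>^2" for \<xi>
  proof -
    have "That n f V \<xi> - Ttarget n f V = c * S \<xi> + \<beta>"
      unfolding That_eq \<beta>_def c_def by (simp add: algebra_simps)
    moreover have "(c * S \<xi> + \<beta>)^2 \<le> 2*c^2 * S \<xi> ^ 2 + 2*\<beta>^2"
    proof -
      have "0 \<le> (c * S \<xi> - \<beta>)^2" by simp
      then show ?thesis unfolding power2_diff power2_sum by (simp add: power_mult_distrib)
    qed
    ultimately show ?thesis by simp
  qed
  have int: "integrable (noise_law n) (\<lambda>\<xi>. 2*c^2 * S \<xi> ^ 2 + 2*\<beta>^2)"
    using ES2(1) by auto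
  have "(\<integral>\<^sup>+ \<xi>. ennreal ((That n f V \<xi> - Ttarget n f V)\<^sup>2) \<partial>noise_law n)
     \<le> (\<integral>\<^sup>+ \<xi>. ennreal (2*c^2 * S \<xi> ^ 2 + 2*\<beta>^2) \<partial>noise_law n)"
    by (intro nn_integral_mono ennreal_leI pt)
  also have "\<dots> = ennreal (integral\<^sup>L (noise_law n) (\<lambda>\<xi>. 2*c^2 * S \<xi> ^ 2 + 2*\<beta>^2))"
    by (rule nn_integral_eq_integral[OF int]) auto
  also have "integral\<^sup>L (noise_law n) (\<lambda>\<xi>. 2*c^2 * S \<xi> ^ 2 + 2*\<beta>^2)
      = 2*c^2 * integral\<^sup>L (noise_law n) (\<lambda>\<xi>. S \<xi> ^ 2) + 2*\<beta>^2"
    using ES2(1) by (simp add: Bochner_Integration.integral_add P.prob_space)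
  also have "\<dots> \<le> (96*K8 + 36*Mm^4)/real n + 4*e^8"
  proof -
    have K0: "0 \<le> K8" unfolding K8_def using Mb0 by simp
    have a: "2*c^2 * integral\<^sup>L (noise_law n) (\<lambda>\<xi>. S \<xi> ^ 2) \<le> 96*K8/real n"
    proof -
      have "2*c^2 * integral\<^sup>L (noise_law n) (\<lambda>\<xi>. S \<xi> ^ 2) \<le> 2*c^2 * (192 * K8 * real (n-1)^3)"
        using ES2(2) by (intro mult_left_mono) auto
      also have "\<dots> \<le> 2*c^2 * (192 * K8 * real n^3)"
        using K0 by (intro mult_left_mono power_mono) auto
      also have "\<dots> = 96*K8/real n" unfolding c_def using npos
        by (simp add: field_simps power2_eq_square power3_eq_cube)
      finally show ?thesis .
    qed
    have b: "\<bar>\<beta>\<bar> \<le> 3*Mm^2/real n + e^4" using bias unfolding \<beta>_def c_def .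
    have "\<beta>^2 \<le> (3*Mm^2/real n + e^4)^2"
      using b by (metis abs_ge_zero power2_abs power_mono)
    also have "\<dots> \<le> 2*(3*Mm^2/real n)^2 + 2*(e^4)^2"
    proof -
      have "0 \<le> (3*Mm^2/real n - e^4)^2" by simp
      then show ?thesis unfolding power2_diff power2_sum by simp
    qed
    also have "(3*Mm^2/real n)^2 \<le> 9*Mm^4/real n"
    proof -
      have "(3*Mm^2/real n)^2 = 9*Mm^4/(real n * real n)" by (simp add: power2_eq_square power4_eq_xxxx field_simps)
      also have "\<dots> \<le> 9*Mm^4/real n" using n2
        by (intro divide_left_mono) (auto simp: mult_le_cancel_left1)
      finally show ?thesis .
    qed
    finally have "\<beta>^2 \<le> 18*Mm^4/real n + 2*e^8" by (simp add: power_mult[symmetric])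
    with a show ?thesis by (simp add: add_divide_distrib)
  qed
  finally show ?thesis by (simp add: ennreal_leI)
qed

end

lemma holder_basic:
  assumes "holder_class \<alpha> M f"
  shows "0 \<le> M" "\<And>x. 0 \<le> x \<Longrightarrow> x \<le> 1 \<Longrightarrow> \<bar>f x\<bar> \<le> M"
proof -
  obtain D where D0: "\<forall>x\<in>{0..1}. D 0 x = f x" and Db: "\<forall>j\<le>nat \<lfloor>\<alpha>\<rfloor>. \<forall>x\<in>{0..1}. \<bar>D j x\<bar> \<le> M"
    using assms unfolding holder_class_def Let_def by blast
  show "\<bar>f x\<bar> \<le> M" if "0 \<le> x" "x \<le> 1" for x using D0 Db that by force
  then show "0 \<le> M" using abs_ge_zero order.trans by (metis order.refl zero_le_one)
qed

lemma holder_delta: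
  assumes a: "0 < \<alpha>" and h: "holder_class \<alpha> M f" and n: "1 \<le> n" and i: "i < n"
  shows "\<bar>delta n f i\<bar> \<le> M * (if \<alpha> < 1 then real n powr (-\<alpha>) else 1 / real n)"
proof -
  define k where "k = nat \<lfloor>\<alpha>\<rfloor>"
  obtain D where D0: "\<forall>x\<in>{0..1}. D 0 x = f x"
    and Dd: "\<forall>j<k. \<forall>x\<in>{0..1}. (D j has_real_derivative D (Suc j) x) (at x within {0..1})"
    and Db: "\<forall>j\<le>k. \<forall>x\<in>{0..1}. \<bar>D j x\<bar> \<le> M"
    and Dh: "\<forall>x\<in>{0..1}. \<forall>y\<in>{0..1}. \<bar>D k x - D k y\<bar> \<le> M * \<bar>x - y\<bar> powr (\<alpha> - real k)"
    using h unfolding holder_class_def Let_def k_def by blast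
  define x where "x = real (Suc i) / real n"
  define y where "y = real i / real n"
  have xy: "x \<in> {0..1}" "y \<in> {0..1}" using n i unfolding x_def y_def by auto
  have "x - y = 1 / real n" unfolding x_def y_def by (simp add: diff_divide_distrib[symmetric])
  then have dxy: "\<bar>x - y\<bar> = 1 / real n" by simp
  have del: "delta n f i = D 0 x - D 0 y" unfolding delta_def x_def[symmetric] y_def[symmetric] using D0 xy by simp
  show ?thesis
  proof (cases "\<alpha> < 1")
    case True
    then have k0: "k = 0" unfolding k_def using a by linarith
    have "\<bar>delta n f i\<bar> \<le> M * (1 / real n) powr \<alpha>" using Dh xy unfolding del k0 dxy[symmetric] by simp
    also have "(1 / real n) powr \<alpha> = real n powr (-\<alpha>)" using n by (simp add: powr_minus_divide powr_divide)
    finally show ?thesis using True by simp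
  next
    case False
    then have k1: "1 \<le> k" unfolding k_def by linarith
    have "norm (D 0 x - D 0 y) \<le> M * norm (x - y)"
    proof (rule field_differentiable_bound[of "{0..1}"])
      show "convex {0..1::real}" by simp
      show "\<And>z. z \<in> {0..1} \<Longrightarrow> (D 0 has_field_derivative D 1 z) (at z within {0..1})"
        using Dd k1 by auto
      show "\<And>z. z \<in> {0..1} \<Longrightarrow> norm (D 1 z) \<le> M" using Db k1 by auto
    qed (use xy in auto)
    then show ?thesis using False unfolding del using dxy by simp
  qed
qed

theorem proposition4p3:
  fixes \<alpha> M :: real
  assumes "\<alpha> > 0"
  shows "\<exists>C>0. \<forall>n\<ge>2. \<forall>f V.
           holder_class \<alpha> M f \<longrightarrow> (\<forall>i\<in>{1..n}. 0 \<le> V i \<and> V i \<le> M) \<longrightarrow>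
           (\<integral>\<^sup>+ \<xi>. ennreal ((That n f V \<xi> - Ttarget n f V)\<^sup>2) \<partial>noise_law n)
             \<le> ennreal (C * (1 / real n + real n powr (- 8 * \<alpha>)))"
proof -
  define K where "K = (3::real)^8 * ((2*M)^8 + 210*M^4)"
  define Q where "Q = 4*M^2 + 2*M"
  define C where "C = 96*K + 36*Q^4 + 4*M^8 + 1"
  have K0: "0 \<le> K" unfolding K_def by (simp add: zero_le_even_power)
  have "0 \<le> Q^4" "0 \<le> M^8" by (simp_all add: zero_le_even_power)
  then have C0: "0 < C" unfolding C_def using K0 by linarith
  show ?thesis
  proof (intro exI[of _ C] conjI allI impI C0)
    fix n :: nat and f :: "real \<Rightarrow> real" and V :: "nat \<Rightarrow> real"
    assume n: "2 \<le> n" and h: "holder_class \<alpha> M f" and V: "\<forall>i\<in>{1..n}. 0 \<le> V i \<and> V i \<le> M"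
    define e where "e = M * (if \<alpha> < 1 then real n powr (-\<alpha>) else 1 / real n)"
    interpret S: setting n f V M e
    proof
      show "2 \<le> n" by fact
      show "0 \<le> M" by (rule holder_basic(1)[OF h])
      show "\<And>x. 0 \<le> x \<Longrightarrow> x \<le> 1 \<Longrightarrow> \<bar>f x\<bar> \<le> M" by (rule holder_basic(2)[OF h])
      show "\<And>i. i \<in> {1..n} \<Longrightarrow> 0 \<le> V i \<and> V i \<le> M" using V by auto
      show "\<And>i. i \<in> {1..n-1} \<Longrightarrow> \<bar>delta n f i\<bar> \<le> e"
        unfolding e_def using holder_delta[OF assms h] n by auto
    qed
    have M0: "0 \<le> M" by (rule holder_basic(1)[OF h])
    have npos: "0 < real n" using n by simp
    have e8: "4 * e^8 \<le> 4*M^8 * (1 / real n + real n powr (- 8 * \<alpha>))"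
    proof (cases "\<alpha> < 1")
      case True
      have "e^8 = M^8 * real n powr (- 8 * \<alpha>)"
        unfolding e_def using True npos by (simp add: power_mult_distrib powr_realpow[symmetric] powr_powr mult.commute)
      moreover have "M^8 * real n powr (- 8 * \<alpha>) \<le> M^8 * (1 / real n + real n powr (- 8 * \<alpha>))"
        using npos by (intro mult_left_mono) (auto simp: zero_le_even_power)
      ultimately show ?thesis by simp
    next
      case False
      have "e^8 = M^8 / real n^8" unfolding e_def using False by (simp add: power_divide power_mult_distrib)
      also have "\<dots> \<le> M^8 / real n"
        using npos n by (intro divide_left_mono) (auto simp: zero_le_even_power intro!: self_le_power)
      finally have "e^8 \<le> M^8 / real n" .
      moreover have "0 \<le> M^8 * real n powr (- 8 * \<alpha>)" by (simp add: zero_le_even_power)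
      moreover have "4*M^8 * (1 / real n + real n powr (- 8 * \<alpha>)) = 4*(M^8/real n) + 4*(M^8 * real n powr (- 8 * \<alpha>))"
        by (simp add: algebra_simps)
      ultimately show ?thesis by linarith
    qed
    have "(\<integral>\<^sup>+ \<xi>. ennreal ((That n f V \<xi> - Ttarget n f V)\<^sup>2) \<partial>noise_law n)
        \<le> ennreal ((96*S.K8 + 36*S.Mm^4)/real n + 4*e^8)" by (rule S.main_bound)
    also have "(96*S.K8 + 36*S.Mm^4)/real n + 4*e^8 \<le> C * (1 / real n + real n powr (- 8 * \<alpha>))"
    proof -
      have kk: "S.K8 = K" "S.Mm = Q" unfolding S.K8_def S.Mm_def K_def Q_def by simp_all
      have p: "0 \<le> real n powr (- 8 * \<alpha>)" "0 \<le> 1 / real n" by simp_all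
      have "(96*K + 36*Q^4)/real n \<le> (96*K + 36*Q^4) * (1 / real n + real n powr (- 8 * \<alpha>))"
      proof -
        have A0: "0 \<le> 96*K + 36*Q^4" using K0 by (simp add: zero_le_even_power)
        have "(96*K + 36*Q^4) * (1 / real n + real n powr (- 8 * \<alpha>)) = (96*K + 36*Q^4)/real n + (96*K + 36*Q^4) * real n powr (- 8 * \<alpha>)"
          by (simp add: algebra_simps add_divide_distrib)
        moreover have "0 \<le> (96*K + 36*Q^4) * real n powr (- 8 * \<alpha>)" using A0 p by simp
        ultimately show ?thesis by linarith
      qed
      then have "(96*K + 36*Q^4)/real n + 4*e^8 \<le> (96*K + 36*Q^4 + 4*M^8) * (1 / real n + real n powr (- 8 * \<alpha>))"
        using e8 by (simp add: algebra_simps)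
      also have "\<dots> \<le> C * (1 / real n + real n powr (- 8 * \<alpha>))"
        unfolding C_def using p by (intro mult_right_mono) auto
      finally show ?thesis unfolding kk .
    qed
    finally show "(\<integral>\<^sup>+ \<xi>. ennreal ((That n f V \<xi> - Ttarget n f V)\<^sup>2) \<partial>noise_law n)
             \<le> ennreal (C * (1 / real n + real n powr (- 8 * \<alpha>)))" by (simp add: ennreal_leI)
  qed
qed


end
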